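(* (1) For every model $\mathfrak M$: $\mathfrak M\in\mathcal D_{P-}$ iff every sequent $(\{p\},((\bot\to\bot)\to\bot)\to p)$, $p\in P0$, is valid in $\mathfrak M$. (2) For every model $\mathfrak M$ with symmetric relation: $\mathfrak M$ is an interpretation iff every sequent $(\{p\},((p\to\bot)\to\bot)\to p)$, $p\in P0$, is valid in $\mathfrak M$. (3) For every model $\mathfrak M$ with transitive relation: $\mathfrak M$ is an interpretation iff every sequent $(\{p\},(\bot\to\bot)\to p)$, $p\in P0$, is valid in $\mathfrak M$.
   Context: Fix a countable set $P0$ of propositional variables; $Form$: $\varphi::=p\mid\bot\mid(\varphi\wedge\varphi)\mid(\varphi\to\varphi)$. A model is $\mathfrak M=(W,R,V)$ with $W\neq\emptyset$, $R\subseteq W\times W$, $V:P0\to\wp(W)$. Satisfaction: $\bot$ never true; $p$ true at $s$ iff $s\in V(p)$; $\wedge$ pointwise; $\mathfrak M,s\models\varphi\to\psi$ iff for all $t$ with $sRt$, $\mathfrak M,t\models\varphi$ implies $\mathfrak M,t\models\psi$. A sequent $(\Gamma,\varphi)$ ($\Gamma\subseteq Form$) is valid in $\mathfrak M$ iff for every $s\in W$, if $s$ satisfies all members of $\Gamma$ then $s$ satisfies $\varphi$. For $X\subseteq W$: $-X=W\setminus X$, $R[X]=\{t:\exists s\in X,\ sRt\}$, $R^\Box(X)=\{s:\forall t\,(sRt\Rightarrow t\in X)\}$. A proposition of $(W,R)$ is $X\subseteq W$ with $R[X]\cap R^\Box(R[X])\subseteq X$; an interpretation is a model with $V(p)$ a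 proposition for every $p$. $\mathcal D_{P-}$ is the class of models $(W,R,V)$ such that $V(p)\subseteq R^\Box(-R^\Box(\emptyset)\cup V(p))$ for all $p\in P0$. *)

theory Defs
  imports Main "HOL-Library.Countable"
begin

datatype 'p form = Var 'p | Bot | Conj "'p form" "'p form" | Imp "'p form" "'p form"

record ('s, 'p) model =
  W :: "'s set"
  R :: "('s \<times> 's) set"
  V :: "'p \<Rightarrow> 's set"

definition is_model :: "('s, 'p) model \<Rightarrow> bool" where
  "is_model M \<longleftrightarrow> W M \<noteq> {} \<and> R M \<subseteq> W M \<times> W M \<and> (\<forall>p. V M p \<subseteq> W M)"

fun sat :: "('s, 'p) model \<Rightarrow> 's \<Rightarrow> 'p form \<Rightarrow> bool" where
  "sat M s (Var p) \<longleftrightarrow> s \<in> V M p"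
| "sat M s Bot \<longleftrightarrow> False"
| "sat M s (Conj a b) \<longleftrightarrow> sat M s a \<and> sat M s b"
| "sat M s (Imp a b) \<longleftrightarrow> (\<forall>t. (s, t) \<in> R M \<longrightarrow> sat M t a \<longrightarrow> sat M t b)"

definition valid_seq :: "('s, 'p) model \<Rightarrow> 'p form set \<Rightarrow> 'p form \<Rightarrow> bool" where
  "valid_seq M \<Gamma> \<phi> \<longleftrightarrow> (\<forall>s \<in> W M. (\<forall>\<psi> \<in> \<Gamma>. sat M s \<psi>) \<longrightarrow> sat M s \<phi>)"

definition compl :: "'s set \<Rightarrow> 's set \<Rightarrow> 's set" where
  "compl Wd X = Wd - X"

definition img :: "('s \<times> 's) set \<Rightarrow> 's set \<Rightarrow> 's set" where
  "img Rel X = {t. \<exists>s \<in> X. (s, t) \<in> Rel}"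

definition box :: "'s set \<Rightarrow> ('s \<times> 's) set \<Rightarrow> 's set \<Rightarrow> 's set" where
  "box Wd Rel X = {s \<in> Wd. \<forall>t. (s, t) \<in> Rel \<longrightarrow> t \<in> X}"

definition is_proposition :: "'s set \<Rightarrow> ('s \<times> 's) set \<Rightarrow> 's set \<Rightarrow> bool" where
  "is_proposition Wd Rel X \<longleftrightarrow> X \<subseteq> Wd \<and> img Rel X \<inter> box Wd Rel (img Rel X) \<subseteq> X"

definition is_interpretation :: "('s, 'p) model \<Rightarrow> bool" where
  "is_interpretation M \<longleftrightarrow> (\<forall>p. is_proposition (W M) (R M) (V M p))"

definition in_DPminus :: "('s, 'p) model \<Rightarrow> bool" where
  "in_DPminus M \<longleftrightarrow>
     (\<forall>p. V M p \<subseteq> box (W M) (R M) (compl (W M) (box (W M) (R M) {}) \<union> V M p))"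

end

theory Submission
  imports Defs
begin

lemma sat_top: "sat M s (Imp Bot Bot)" by simp

theorem mainTheorem4:
  fixes M :: "('s, 'p :: countable) model"
  assumes "is_model M"
  shows "(in_DPminus M \<longleftrightarrow>
            (\<forall>p. valid_seq M {Var p} (Imp (Imp (Imp Bot Bot) Bot) (Var p))))
       \<and> (sym (R M) \<longrightarrow> (is_interpretation M \<longleftrightarrow>
            (\<forall>p. valid_seq M {Var p} (Imp (Imp (Imp (Var p) Bot) Bot) (Var p)))))
       \<and> (trans (R M) \<longrightarrow> (is_interpretation M \<longleftrightarrow>
            (\<forall>p. valid_seq M {Var p} (Imp (Imp Bot Bot) (Var p)))))"
proof -
  have RW: "\<And>s t. (s,t) \<in> R M \<Longrightarrow> s \<in> W M \<and> t \<in> W M"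
    and VW: "\<And>p. V M p \<subseteq> W M" using assms unfolding is_model_def by auto
  have s1: "\<And>p s. sat M s (Imp (Imp (Imp Bot Bot) Bot) (Var p)) \<longleftrightarrow>
      (\<forall>t. (s,t) \<in> R M \<longrightarrow> (\<forall>u. (t,u) \<notin> R M) \<longrightarrow> t \<in> V M p)" by simp
  have d1: "\<And>p. V M p \<subseteq> box (W M) (R M) (compl (W M) (box (W M) (R M) {}) \<union> V M p)
     \<longleftrightarrow> (\<forall>s \<in> V M p. \<forall>t. (s,t) \<in> R M \<longrightarrow> (\<forall>u. (t,u) \<notin> R M) \<longrightarrow> t \<in> V M p)"
    unfolding box_def compl_def using RW VW by blast
  have 1: "in_DPminus M \<longleftrightarrow>
            (\<forall>p. valid_seq M {Var p} (Imp (Imp (Imp Bot Bot) Bot) (Var p)))"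
    unfolding in_DPminus_def valid_seq_def d1 s1 using VW by (auto; blast)
  have s2: "\<And>p t. sat M t (Imp (Imp (Var p) Bot) Bot) \<longleftrightarrow>
      (\<forall>u. (t,u) \<in> R M \<longrightarrow> (\<exists>v. (u,v) \<in> R M \<and> v \<in> V M p))" by auto
  have 2: "sym (R M) \<longrightarrow> (is_interpretation M \<longleftrightarrow>
            (\<forall>p. valid_seq M {Var p} (Imp (Imp (Imp (Var p) Bot) Bot) (Var p))))"
  proof
    assume sy: "sym (R M)"
    have sy': "\<And>a b. (a,b) \<in> R M \<Longrightarrow> (b,a) \<in> R M" using sy unfolding sym_def by blast
    have "is_proposition (W M) (R M) (V M p) \<longleftrightarrow>
       valid_seq M {Var p} (Imp (Imp (Imp (Var p) Bot) Bot) (Var p))" for p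
    proof
      assume P: "is_proposition (W M) (R M) (V M p)"
      show "valid_seq M {Var p} (Imp (Imp (Imp (Var p) Bot) Bot) (Var p))"
        unfolding valid_seq_def
      proof (intro ballI impI)
        fix s assume "s \<in> W M" "\<forall>\<psi>\<in>{Var p}. sat M s \<psi>"
        hence sV: "s \<in> V M p" by simp
        show "sat M s (Imp (Imp (Imp (Var p) Bot) Bot) (Var p))"
        proof (subst sat.simps(4), intro allI impI)
          fix t assume st: "(s,t) \<in> R M" and h: "sat M t (Imp (Imp (Var p) Bot) Bot)"
          have "t \<in> img (R M) (V M p)" unfolding img_def using st sV by blast
          moreover have "t \<in> box (W M) (R M) (img (R M) (V M p))"
            unfolding box_def img_def using RW st h[unfolded s2] sy' by blast
          ultimately show "sat M t (Var p)" using P unfolding is_proposition_def by auto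
        qed
      qed
    next
      assume Vd: "valid_seq M {Var p} (Imp (Imp (Imp (Var p) Bot) Bot) (Var p))"
      show "is_proposition (W M) (R M) (V M p)"
        unfolding is_proposition_def
      proof (intro conjI subsetI)
        show "x \<in> W M" if "x \<in> V M p" for x using VW that by blast
        fix t assume "t \<in> img (R M) (V M p) \<inter> box (W M) (R M) (img (R M) (V M p))"
        then obtain s where sV: "s \<in> V M p" and st: "(s,t) \<in> R M"
          and b: "\<forall>u. (t,u) \<in> R M \<longrightarrow> (\<exists>v \<in> V M p. (v,u) \<in> R M)"
          unfolding img_def box_def by blast
        have "sat M t (Imp (Imp (Var p) Bot) Bot)" unfolding s2 using b sy' by blast
        moreover have "sat M s (Imp (Imp (Imp (Var p) Bot) Bot) (Var p))"
          using Vd sV VW unfolding valid_seq_def by auto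
        ultimately show "t \<in> V M p" using st by auto
      qed
    qed
    then show "is_interpretation M \<longleftrightarrow>
            (\<forall>p. valid_seq M {Var p} (Imp (Imp (Imp (Var p) Bot) Bot) (Var p)))"
      unfolding is_interpretation_def by blast
  qed
  have 3: "trans (R M) \<longrightarrow> (is_interpretation M \<longleftrightarrow>
            (\<forall>p. valid_seq M {Var p} (Imp (Imp Bot Bot) (Var p))))"
  proof
    assume tr: "trans (R M)"
    have tr': "\<And>a b c. (a,b) \<in> R M \<Longrightarrow> (b,c) \<in> R M \<Longrightarrow> (a,c) \<in> R M"
      using tr unfolding trans_def by blast
    have "is_proposition (W M) (R M) (V M p) \<longleftrightarrow>
       valid_seq M {Var p} (Imp (Imp Bot Bot) (Var p))" for p
    proof
      assume P: "is_proposition (W M) (R M) (V M p)"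
      show "valid_seq M {Var p} (Imp (Imp Bot Bot) (Var p))"
        unfolding valid_seq_def
      proof (intro ballI impI)
        fix s assume "s \<in> W M" "\<forall>\<psi>\<in>{Var p}. sat M s \<psi>"
        hence sV: "s \<in> V M p" by simp
        show "sat M s (Imp (Imp Bot Bot) (Var p))"
        proof (subst sat.simps(4), intro allI impI)
          fix t assume st: "(s,t) \<in> R M" and "sat M t (Imp Bot Bot)"
          have "t \<in> img (R M) (V M p)" unfolding img_def using st sV by blast
          moreover have "t \<in> box (W M) (R M) (img (R M) (V M p))"
            unfolding box_def img_def using RW st sV tr' by blast
          ultimately show "sat M t (Var p)" using P unfolding is_proposition_def by auto
        qed
      qed
    next
      assume Vd: "valid_seq M {Var p} (Imp (Imp Bot Bot) (Var p))"
      show "is_proposition (W M) (R M) (V M p)"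
        unfolding is_proposition_def
      proof (intro conjI subsetI)
        show "x \<in> W M" if "x \<in> V M p" for x using VW that by blast
        fix t assume "t \<in> img (R M) (V M p) \<inter> box (W M) (R M) (img (R M) (V M p))"
        then obtain s where sV: "s \<in> V M p" and st: "(s,t) \<in> R M"
          unfolding img_def box_def by blast
        have "sat M s (Imp (Imp Bot Bot) (Var p))"
          using Vd sV VW unfolding valid_seq_def by auto
        then show "t \<in> V M p" using st by auto
      qed
    qed
    then show "is_interpretation M \<longleftrightarrow>
            (\<forall>p. valid_seq M {Var p} (Imp (Imp Bot Bot) (Var p)))"
      unfolding is_interpretation_def by blast
  qed
  show ?thesis using 1 2 3 by blast
qed

end
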